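(* Let $a,b,k,l$ be pairwise distinct complex parameters and $J,J'$ commuting constant $N\times N$ matrices. Let $H_{xy}$ ($x\neq y$) be $N\times N$ matrix functions of variables $\xi^J_k,\xi^{J'}_l$ satisfying $$\partial^J_kH_{xy}=\frac{J}{k-x}H_{xy}-H_{xy}\frac{J}{k-y}+H_{xk}JH_{ky},\qquad \partial^{J'}_lH_{xy}=\frac{J'}{l-x}H_{xy}-H_{xy}\frac{J'}{l-y}+H_{xl}J'H_{ly}$$ for all relevant pairwise distinct labels. Then the system is multidimensionally consistent: computing $\partial^{J'}_l\partial^J_kH_{ab}$ and $\partial^J_k\partial^{J'}_lH_{ab}$ by differentiating the right-hand sides and substituting the system for all first derivatives yields identical expressions.
   Context: $\partial^J_k$ denotes $\partial/\partial\xi^J_k$, where $\xi^J_k$ is a Miwa-type variable labelled by the complex parameter $k$ and the constant matrix $J$. *)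

theory Defs
  imports "Jordan_Normal_Form.Matrix"
begin

definition flow_rhs ::
  "complex mat \<Rightarrow> complex \<Rightarrow> (complex \<Rightarrow> complex \<Rightarrow> complex mat) \<Rightarrow> complex \<Rightarrow> complex \<Rightarrow> complex mat" where
  "flow_rhs J k H x y =
     (1 / (k - x)) \<cdot>\<^sub>m (J * H x y) - (1 / (k - y)) \<cdot>\<^sub>m (H x y * J) + H x k * J * H k y"

text \<open>Result of differentiating flow_rhs J k H x y (J constant, k x y constant parameters)
  when the first derivatives of the H's are G (product rule).
  Substituting G := flow_rhs J' l H gives the formal second derivative of H_xy.\<close>
definition flow_rhs_deriv ::
  "complex mat \<Rightarrow> complex \<Rightarrow> (complex \<Rightarrow> complex \<Rightarrow> complex mat)
     \<Rightarrow> (complex \<Rightarrow> complex \<Rightarrow> complex mat) \<Rightarrow> complex \<Rightarrow> complex \<Rightarrow> complex mat" where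
  "flow_rhs_deriv J k H G x y =
     (1 / (k - x)) \<cdot>\<^sub>m (J * G x y) - (1 / (k - y)) \<cdot>\<^sub>m (G x y * J)
     + G x k * J * H k y + H x k * J * G k y"

end

theory Submission
  imports Defs
begin

locale mring = fixes N :: nat
begin
abbreviation "C \<equiv> carrier_mat N N :: complex mat set"
lemma cl_mult[simp]: "A \<in> C \<Longrightarrow> B \<in> C \<Longrightarrow> A * B \<in> C" by auto
lemma cl_add[simp]: "A \<in> C \<Longrightarrow> B \<in> C \<Longrightarrow> A + B \<in> C" by auto
lemma cl_smult: "A \<in> C \<Longrightarrow> c \<cdot>\<^sub>m A \<in> C" by auto
lemma n_minus: "A \<in> C \<Longrightarrow> B \<in> C \<Longrightarrow> A - B = A + (-1) \<cdot>\<^sub>m B"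
  by (intro eq_matI) auto
lemma n_dl: "A \<in> C \<Longrightarrow> B \<in> C \<Longrightarrow> X \<in> C \<Longrightarrow> X * (A + B) = X * A + X * B"
  by (simp add: mult_add_distrib_mat)
lemma n_dr: "A \<in> C \<Longrightarrow> B \<in> C \<Longrightarrow> X \<in> C \<Longrightarrow> (A + B) * X = A * X + B * X"
  by (simp add: add_mult_distrib_mat)
lemma n_as: "A \<in> C \<Longrightarrow> B \<in> C \<Longrightarrow> X \<in> C \<Longrightarrow> (A * B) * X = A * (B * X)"
  by simp
lemma n_sl: "A \<in> C \<Longrightarrow> B \<in> C \<Longrightarrow> (c \<cdot>\<^sub>m A) * B = c \<cdot>\<^sub>m (A * B)"
  by (rule mult_smult_assoc_mat)
lemma n_sr: "A \<in> C \<Longrightarrow> B \<in> C \<Longrightarrow> A * (c \<cdot>\<^sub>m B) = c \<cdot>\<^sub>m (A * B)"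
  by (rule mult_smult_distrib)
lemma n_ss: "A \<in> C \<Longrightarrow> c \<cdot>\<^sub>m (d \<cdot>\<^sub>m A) = (c * d) \<cdot>\<^sub>m A"
  by (intro eq_matI) auto
lemma n_sa: "A \<in> C \<Longrightarrow> B \<in> C \<Longrightarrow> c \<cdot>\<^sub>m (A + B) = c \<cdot>\<^sub>m A + c \<cdot>\<^sub>m B"
  by (rule add_smult_distrib_left_mat)
lemma a_as: "A \<in> C \<Longrightarrow> B \<in> C \<Longrightarrow> X \<in> C \<Longrightarrow> (A + B) + X = A + (B + X)"
  by simp
lemma a_c: "A \<in> C \<Longrightarrow> B \<in> C \<Longrightarrow> A + B = B + A"
  by (rule comm_add_mat)
lemma a_lc: "A \<in> C \<Longrightarrow> B \<in> C \<Longrightarrow> X \<in> C \<Longrightarrow> A + (B + X) = B + (A + X)"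
  by (metis a_as a_c)
lemmas norm = cl_smult n_minus n_dl n_dr n_as n_sl n_sr n_ss n_sa a_as a_c a_lc
end

theorem mainTheorem11:
  fixes N :: nat and a b k l :: complex and J J' :: "complex mat"
    and H :: "complex \<Rightarrow> complex \<Rightarrow> complex mat"
  assumes distinct: "distinct [a, b, k, l]"
    and J: "J \<in> carrier_mat N N" and J': "J' \<in> carrier_mat N N"
    and comm: "J * J' = J' * J"
    and H: "\<And>x y. x \<in> {a, b, k, l} \<Longrightarrow> y \<in> {a, b, k, l} \<Longrightarrow> x \<noteq> y \<Longrightarrow> H x y \<in> carrier_mat N N"
  shows "flow_rhs_deriv J k H (flow_rhs J' l H) a b = flow_rhs_deriv J' l H (flow_rhs J k H) a b"
proof -
  interpret mring N .
  have hs: "H a b \<in> C" "H a k \<in> C" "H a l \<in> C" "H k b \<in> C" "H l b \<in> C" "H k l \<in> C" "H l k \<in> C"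
    using H distinct by auto
  have c2: "J' * (J * X) = J * (J' * X)" if "X \<in> C" for X
    using that J J' comm by (metis n_as)
  define S where "S = H a k * (J * (H k l * (J' * H l b))) +
        (H a l * (J' * (H l k * (J * H k b))) +
         (1 / (k - a) \<cdot>\<^sub>m (J * (H a l * (J' * H l b))) +
          (1 / (l - a) \<cdot>\<^sub>m (J' * (H a k * (J * H k b))) +
            (1 / ((k - a) * (l - a)) \<cdot>\<^sub>m (J * (J' * H a b)) +
             (1 / ((k - b) * (l - b)) \<cdot>\<^sub>m (H a b * (J' * J)) +
              (- (1 / (k - b)) \<cdot>\<^sub>m (H a l * (J' * (H l b * J))) +
               (- (1 / (l - b)) \<cdot>\<^sub>m (H a k * (J * (H k b * J'))) +
                 (- (1 / ((k - a) * (l - b))) \<cdot>\<^sub>m (J * (H a b * J')) +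
                  - (1 / ((k - b) * (l - a))) \<cdot>\<^sub>m (J' * (H a b * J))))))))))"
  have SC: "S \<in> C" unfolding S_def using hs J J' by (simp add: cl_smult)
  have z: "c \<cdot>\<^sub>m X + (- c) \<cdot>\<^sub>m X = 0\<^sub>m N N" if "X \<in> C" for c X
    using that by (intro eq_matI) auto
  define Z1 where "Z1 = H a k * (J * (J' * H k b))"
  define Z2 where "Z2 = H a l * (J * (J' * H l b))"
  have Z: "Z1 \<in> C" "Z2 \<in> C" unfolding Z1_def Z2_def using hs J J' by auto
  have L: "flow_rhs_deriv J k H (flow_rhs J' l H) a b = S + ((1/(l-k)) \<cdot>\<^sub>m Z1 + (- (1/(l-k))) \<cdot>\<^sub>m Z1)"
    unfolding flow_rhs_deriv_def flow_rhs_def S_def Z1_def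
    using hs J J' by (simp add: norm c2 comm mult.commute)
  have R: "flow_rhs_deriv J' l H (flow_rhs J k H) a b = S + ((1/(k-l)) \<cdot>\<^sub>m Z2 + (- (1/(k-l))) \<cdot>\<^sub>m Z2)"
    unfolding flow_rhs_deriv_def flow_rhs_def S_def Z2_def
    using hs J J' by (simp add: norm c2 comm mult.commute)
  show ?thesis unfolding L R using z Z SC by simp
qed

end
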